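(* Suppose that (A1) and (V4') hold, and let $\theta^*\in\mathbb{R}^d$ satisfy $\bar f(\theta^* )=0$. Then there are positive constants $\delta_1$, $b$ and $c$ such that every solution of $\frac{d}{dt}\vartheta_t=\bar f(\vartheta_t)$ satisfies, with $\tilde\vartheta_t=\vartheta_t-\theta^*$, $$\|\tilde\vartheta_t\|\le b\|\tilde\vartheta_0\|e^{-\delta_1t}\qquad\text{for all } 0\le t\le\tau_c,\quad \tau_c=\min\{t\ge0:\|\tilde\vartheta_t\|\le c\}.$$
   Context: $\bar f\colon\mathbb{R}^d\to\mathbb{R}^d$ is the mean vector field of a QSA ODE $\frac{d}{dt}\Theta_t=\alpha f(\Theta_t,\xi_t)$, where $\xi_t$ is an almost periodic probing signal and $\bar f(\theta)$ is the time average of $f(\theta,\xi_t)$. (A1): there is $L_f<\infty$ with $\|\bar f(\theta')-\bar f(\theta)\|\le L_f\|\theta'-\theta\|$ and $\|f(\theta',\xi)-f(\theta,\xi)\|+\|f(\theta,\xi')-f(\theta,\xi)\|\le L_f[\|\theta'-\theta\|+\|\xi'-\xi\|]$ for all arguments. (V4'): there exist $V\colon\mathbb{R}^d\to\mathbb{R}_+$ and constants $L_V<\infty$, $\delta_0,\delta,T>0$ such that $|V(\theta')-V(\theta)|\le L_V\|\theta'-\theta\|$ for all $\theta,\theta'$, $V(\theta)\ge\|\theta\|$ when $\|\theta\|\ge\delta_0^{-1}$, and every solution of $\frac{d}{dt}\vartheta=\bar f(\vartheta)$ satisfies $V(\vartheta_{\tau+T})-V(\vartheta_\tau)\le-\delta\|\vartheta_\tau\|$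 for all $\tau\ge0$ with $\|\vartheta_\tau\|>\delta^{-1}$. If the set defining $\tau_c$ is empty, $\tau_c=\infty$. *)

theory Defs
  imports "HOL-Analysis.Analysis"
begin

definition ode_solution :: "('a::euclidean_space \<Rightarrow> 'a) \<Rightarrow> (real \<Rightarrow> 'a) \<Rightarrow> bool" where
  "ode_solution fbar x \<longleftrightarrow>
     (\<forall>t\<ge>0. (x has_vector_derivative fbar (x t)) (at t within {0..}))"

text \<open>tau_c = min{t >= 0 : norm (x t - theta_star) <= c}, with value infinity if the set is empty.\<close>
definition hit_time :: "(real \<Rightarrow> 'a::real_normed_vector) \<Rightarrow> 'a \<Rightarrow> real \<Rightarrow> ereal" where
  "hit_time x \<theta>s c = Inf (ereal ` {t. t \<ge> 0 \<and> norm (x t - \<theta>s) \<le> c})"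

end

theory Submission
  imports Defs
begin

lemma growth:
  fixes fbar :: "'a::euclidean_space \<Rightarrow> 'a"
  assumes A1: "\<And>\<theta> \<theta>'. norm (fbar \<theta>' - fbar \<theta>) \<le> L * norm (\<theta>' - \<theta>)"
    and eq: "fbar \<theta>s = 0" and L: "L \<ge> 0"
    and sol: "ode_solution fbar x" and a: "0 \<le> a" "a \<le> t"
  shows "norm (x t - \<theta>s) \<le> exp (L * (t - a)) * norm (x a - \<theta>s)"
proof -
  define g where "g s = exp (- 2 * L * s) * ((x s - \<theta>s) \<bullet> (x s - \<theta>s))" for s
  have der: "(x has_vector_derivative fbar (x s)) (at s within {0..})" if "s \<ge> 0" for s
    using sol that unfolding ode_solution_def by auto
  have cont: "continuous_on {0..} x"
    using der by (meson atLeast_iff continuous_on_eq_continuous_within has_vector_derivative_continuous)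
  have "g a \<ge> g t"
  proof (rule DERIV_nonpos_imp_decreasing_open[OF a(2)])
    fix s assume s: "a < s" "s < t"
    have "(x has_vector_derivative fbar (x s)) (at s)"
      using der[of s] s a at_within_interior[of s "{0..}"] by auto
    then have d: "(x has_derivative (\<lambda>h. h *\<^sub>R fbar (x s))) (at s)"
      by (simp add: has_vector_derivative_def)
    let ?y = "x s - \<theta>s"
    have "(g has_derivative (\<lambda>h. (- 2 * L * exp (- 2 * L * s) * (?y \<bullet> ?y) + exp (- 2 * L * s) * (2 * (?y \<bullet> fbar (x s)))) * h)) (at s)"
      unfolding g_def
      by (auto intro!: derivative_eq_intros d simp: algebra_simps inner_commute)
    then have "DERIV g s :> (- 2 * L * exp (- 2 * L * s) * (?y \<bullet> ?y) + exp (- 2 * L * s) * (2 * (?y \<bullet> fbar (x s))))"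
      by (simp add: has_field_derivative_def)
    moreover have "?y \<bullet> fbar (x s) \<le> L * (?y \<bullet> ?y)"
    proof -
      have "?y \<bullet> fbar (x s) \<le> norm ?y * norm (fbar (x s))" by (rule norm_cauchy_schwarz)
      also have "norm (fbar (x s)) \<le> L * norm ?y" using A1[of \<theta>s "x s"] eq by (simp add: norm_minus_commute)
      then have "norm ?y * norm (fbar (x s)) \<le> norm ?y * (L * norm ?y)" by (simp add: mult_left_mono)
      finally show ?thesis by (simp add: power2_norm_eq_inner[symmetric] power2_eq_square algebra_simps)
    qed
    moreover have "- 2 * L * E * A + E * (2 * B) \<le> 0" if "B \<le> L * A" "E > 0" for E A B :: real
    proof -
      have "E * B \<le> E * (L * A)" using that by (simp add: mult_left_mono)
      then show ?thesis by (simp add: algebra_simps)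
    qed
    ultimately show "\<exists>y. DERIV g s :> y \<and> y \<le> 0"
      by (meson exp_gt_zero)
  next
    have "continuous_on {a..t} x" using cont a by (auto elim: continuous_on_subset)
    then show "continuous_on {a..t} g" unfolding g_def
      by (intro continuous_intros)
  qed
  then have "exp (- 2 * L * t) * (norm (x t - \<theta>s))\<^sup>2 \<le> exp (- 2 * L * a) * (norm (x a - \<theta>s))\<^sup>2"
    by (simp add: g_def power2_norm_eq_inner)
  then have "(norm (x t - \<theta>s))\<^sup>2 \<le> exp (2 * L * (t - a)) * (norm (x a - \<theta>s))\<^sup>2"
    by (simp add: algebra_simps exp_diff exp_minus field_simps)
  also have "\<dots> = (exp (L * (t - a)) * norm (x a - \<theta>s))\<^sup>2"
    by (simp add: power_mult_distrib power2_eq_square exp_add[symmetric])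
  finally show ?thesis
    by (rule power2_le_imp_le) simp
qed

theorem lemmaA10:
  fixes fbar :: "'a::euclidean_space \<Rightarrow> 'a"
    and V :: "'a \<Rightarrow> real"
    and L_f L_V \<delta>0 \<delta> T :: real
    and \<theta>s :: 'a
  assumes A1: "\<And>\<theta> \<theta>'. norm (fbar \<theta>' - fbar \<theta>) \<le> L_f * norm (\<theta>' - \<theta>)"
    and V_nonneg: "\<And>\<theta>. V \<theta> \<ge> 0"
    and V_lip: "\<And>\<theta> \<theta>'. \<bar>V \<theta>' - V \<theta>\<bar> \<le> L_V * norm (\<theta>' - \<theta>)"
    and \<delta>0_pos: "\<delta>0 > 0" and \<delta>_pos: "\<delta> > 0" and T_pos: "T > 0"
    and V_coercive: "\<And>\<theta>. norm \<theta> \<ge> inverse \<delta>0 \<Longrightarrow> V \<theta> \<ge> norm \<theta>"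
    and V_drift: "\<And>x \<tau>. ode_solution fbar x \<Longrightarrow> \<tau> \<ge> 0 \<Longrightarrow> norm (x \<tau>) > inverse \<delta> \<Longrightarrow>
                    V (x (\<tau> + T)) - V (x \<tau>) \<le> - \<delta> * norm (x \<tau>)"
    and eq: "fbar \<theta>s = 0"
  shows "\<exists>\<delta>1 b c. \<delta>1 > 0 \<and> b > 0 \<and> c > 0 \<and>
           (\<forall>x. ode_solution fbar x \<longrightarrow>
              (\<forall>t. 0 \<le> t \<and> ereal t \<le> hit_time x \<theta>s c \<longrightarrow>
                 norm (x t - \<theta>s) \<le> b * norm (x 0 - \<theta>s) * exp (- \<delta>1 * t)))"
proof -
  define L where "L = \<bar>L_f\<bar>"
  have A1': "norm (fbar \<theta>' - fbar \<theta>) \<le> L * norm (\<theta>' - \<theta>)" for \<theta> \<theta>'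
    using A1[of \<theta>' \<theta>] mult_right_mono[OF abs_ge_self[of L_f] norm_ge_zero[of "\<theta>' - \<theta>"]] unfolding L_def
    by linarith
  have L0: "L \<ge> 0" unfolding L_def by simp
  define K where "K = norm \<theta>s"
  define V0 where "V0 = V 0"
  define A where "A = 1 + \<bar>L_V\<bar>"
  define R where "R = max (max (inverse \<delta> + 1) V0) (max (inverse \<delta>0) (max K 1))"
  define c where "c = R + K"
  define \<rho> where "\<rho> = 1 - \<delta> / A"
  define q where "q = max \<rho> (1/2)"
  define \<delta>1 where "\<delta>1 = - ln q / T"
  define b where "b = 4 * A * exp (L * T) / q"
  have A1: "A \<ge> 1" unfolding A_def by simp
  have K0: "K \<ge> 0" unfolding K_def by simp
  have R1: "R \<ge> 1" "R \<ge> K" "R \<ge> V0" "R \<ge> inverse \<delta>0" "R > inverse \<delta>"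
    unfolding R_def by auto
  have q1: "q < 1" "q \<ge> 1/2" "q > 0"
    unfolding q_def \<rho>_def using \<delta>_pos A1 by auto
  have lnq: "ln q < 0" using q1 by simp
  have \<delta>1_pos: "\<delta>1 > 0" unfolding \<delta>1_def using lnq T_pos by (simp add: divide_neg_pos)
  have b4: "b \<ge> 4"
  proof -
    have "exp (L * T) \<ge> 1" using L0 T_pos by simp
    then have "A * exp (L * T) \<ge> 1" using A1 mult_mono[of 1 A 1 "exp (L * T)"] by simp
    then have "4 * A * exp (L * T) \<ge> 4" by simp
    moreover have "4 * A * exp (L * T) \<le> 4 * A * exp (L * T) / q"
      using q1 A1 by (simp add: le_divide_eq)
    ultimately show ?thesis unfolding b_def by linarith
  qed
  have c0: "c > 0" unfolding c_def using R1 K0 by simp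
  have Vbound: "V z \<le> A * norm z" if "norm z \<ge> R" for z
  proof -
    have "V z - V0 \<le> \<bar>L_V\<bar> * norm z"
      using V_lip[of 0 z] mult_right_mono[OF abs_ge_self[of L_V] norm_ge_zero[of z]] unfolding V0_def
      by simp
    then show ?thesis unfolding A_def using R1 that by (simp add: algebra_simps)
  qed
  have step: "V (x (\<tau> + T)) \<le> q * V (x \<tau>)"
    if sol: "ode_solution fbar x" and "\<tau> \<ge> 0" "norm (x \<tau>) \<ge> R" for x \<tau>
  proof -
    have "V (x (\<tau> + T)) - V (x \<tau>) \<le> - \<delta> * norm (x \<tau>)"
      using V_drift[OF sol] that R1 by auto
    moreover have "\<delta> * V (x \<tau>) \<le> \<delta> * (A * norm (x \<tau>))"
      using Vbound[OF that(3)] \<delta>_pos by simp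
    then have "\<delta> / A * V (x \<tau>) \<le> \<delta> * norm (x \<tau>)"
      using A1 by (simp add: field_simps)
    ultimately have "V (x (\<tau> + T)) \<le> \<rho> * V (x \<tau>)"
      unfolding \<rho>_def by (simp add: algebra_simps)
    also have "\<dots> \<le> q * V (x \<tau>)" unfolding q_def
      using V_nonneg by (simp add: mult_right_mono)
    finally show ?thesis .
  qed
  have iter: "V (x (real m * T)) \<le> q ^ m * V (x 0)"
    if sol: "ode_solution fbar x" and "\<forall>k\<le>m. norm (x (real k * T)) \<ge> R" for x m
    using that(2)
  proof (induction m)
    case 0 then show ?case by simp
  next
    case (Suc m)
    have "V (x (real (Suc m) * T)) = V (x (real m * T + T))" by (simp add: algebra_simps)
    also have "\<dots> \<le> q * V (x (real m * T))"
      using step[OF sol, of "real m * T"] Suc.prems T_pos by auto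
    also have "\<dots> \<le> q * (q ^ m * V (x 0))"
      using Suc q1 by (intro mult_left_mono) auto
    finally show ?case by simp
  qed
  show ?thesis
  proof (intro exI conjI allI impI)
    show "\<delta>1 > 0" "b > 0" "c > 0" using \<delta>1_pos b4 c0 by auto
    fix x t assume sol: "ode_solution fbar x" and tt: "0 \<le> t \<and> ereal t \<le> hit_time x \<theta>s c"
    have below: "norm (x s - \<theta>s) > c" if "0 \<le> s" "s < t" for s
    proof (rule ccontr)
      assume "\<not> ?thesis"
      then have "ereal s \<in> ereal ` {t. t \<ge> 0 \<and> norm (x t - \<theta>s) \<le> c}" using that by auto
      then have "hit_time x \<theta>s c \<le> ereal s" unfolding hit_time_def by (rule Inf_lower)
      then have "ereal t \<le> ereal s" using tt by (meson order_trans)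
      then show False using that by simp
    qed
    show "norm (x t - \<theta>s) \<le> b * norm (x 0 - \<theta>s) * exp (- \<delta>1 * t)"
    proof (cases "t = 0")
      case True
      then show ?thesis using b4 by (simp add: mult_le_cancel_right1)
    next
      case False
      then have tpos: "t > 0" using tt by auto
      define m where "m = nat (\<lceil>t / T\<rceil> - 1)"
      have ceil1: "\<lceil>t / T\<rceil> \<ge> 1" using tpos T_pos by (simp add: zero_less_ceiling)
      have mreal: "real m = real_of_int \<lceil>t / T\<rceil> - 1" unfolding m_def using ceil1 by simp
      have mT: "real m * T < t"
      proof -
        have "real_of_int \<lceil>t / T\<rceil> - 1 < t / T" by linarith
        then have "real m < t / T" using mreal by linarith
        then have "real m * T < t / T * T" using T_pos by (rule mult_strict_right_mono)
        then show ?thesis using T_pos by simp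
      qed
      have m1T: "t \<le> (real m + 1) * T"
      proof -
        have "t / T \<le> real m + 1" using mreal by linarith
        then have "t / T * T \<le> (real m + 1) * T" using T_pos by (intro mult_right_mono) auto
        then show ?thesis using T_pos by simp
      qed
      have bigk: "norm (x (real k * T)) \<ge> R" if "k \<le> m" for k
      proof -
        have "real k * T \<le> real m * T" using that T_pos by (simp add: mult_right_mono)
        then have "real k * T < t" using mT by linarith
        then have "norm (x (real k * T) - \<theta>s) > c" using below[of "real k * T"] T_pos by simp
        moreover have "norm (x (real k * T) - \<theta>s) \<le> norm (x (real k * T)) + K"
          unfolding K_def by (rule norm_triangle_ineq4)
        ultimately show ?thesis unfolding c_def by simp
      qed
      have Vm: "V (x (real m * T)) \<le> q ^ m * V (x 0)" using iter[OF sol] bigk by auto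
      have xm: "norm (x (real m * T)) \<le> V (x (real m * T))"
        using V_coercive bigk[of m] R1 by force
      have ym: "norm (x (real m * T) - \<theta>s) \<le> 2 * norm (x (real m * T))"
        using norm_triangle_ineq4[of "x (real m * T)" \<theta>s] bigk[of m] R1 unfolding K_def by simp
      have y0: "norm (x 0 - \<theta>s) > c" using below tpos by simp
      have x0: "norm (x 0) \<le> 2 * norm (x 0 - \<theta>s)" and x0R: "norm (x 0) \<ge> R"
        using y0 norm_triangle_ineq2[of "x 0" \<theta>s] norm_triangle_ineq4[of "x 0" \<theta>s] R1
        unfolding c_def K_def by linarith+
      have V0b: "V (x 0) \<le> 2 * A * norm (x 0 - \<theta>s)"
        proof -
        have "A * norm (x 0) \<le> A * (2 * norm (x 0 - \<theta>s))" using A1 by (intro mult_left_mono[OF x0]) simp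
        then show ?thesis using Vbound[OF x0R] by (simp add: algebra_simps)
      qed
      have gr: "norm (x t - \<theta>s) \<le> exp (L * (t - real m * T)) * norm (x (real m * T) - \<theta>s)"
        using growth[OF A1' eq L0 sol, of "real m * T" t] mT T_pos by simp
      have "exp (L * (t - real m * T)) \<le> exp (L * T)"
      proof -
        have "t - real m * T \<le> T" using m1T by (simp add: algebra_simps)
        then have "L * (t - real m * T) \<le> L * T" using L0 by (rule mult_left_mono)
        then show ?thesis by simp
      qed
      note eb = this
      then have "norm (x t - \<theta>s) \<le> exp (L * T) * norm (x (real m * T) - \<theta>s)"
        using gr mult_right_mono[OF eb norm_ge_zero[of "x (real m * T) - \<theta>s"]] by linarith
      also have "\<dots> \<le> exp (L * T) * (2 * (q ^ m * (2 * A * norm (x 0 - \<theta>s))))"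
      proof -
        have "q ^ m * V (x 0) \<le> q ^ m * (2 * A * norm (x 0 - \<theta>s))"
          using V0b q1 by (simp add: mult_left_mono)
        then have "norm (x (real m * T) - \<theta>s) \<le> 2 * (q ^ m * (2 * A * norm (x 0 - \<theta>s)))"
          using ym xm Vm by linarith
        then show ?thesis by (simp add: mult_left_mono)
      qed
      also have "\<dots> = 4 * A * exp (L * T) * norm (x 0 - \<theta>s) * q ^ m" by (simp add: algebra_simps)
      also have "\<dots> \<le> 4 * A * exp (L * T) * norm (x 0 - \<theta>s) * (exp (- \<delta>1 * t) / q)"
      proof -
        have "q ^ (m + 1) = exp (real (m + 1) * ln q)"
          using q1 by (simp only: exp_of_nat_mult exp_ln)
        also have "\<dots> \<le> exp (- \<delta>1 * t)"
        proof -
          have "t / T \<le> real (m + 1)" using m1T T_pos by (simp add: field_simps)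
          then have "real (m + 1) * ln q \<le> t / T * ln q" using lnq
            by (intro mult_right_mono_neg) auto
          then show ?thesis unfolding \<delta>1_def by (simp add: field_simps)
        qed
        finally have "q * q ^ m \<le> exp (- \<delta>1 * t)" by simp
        then have "q ^ m \<le> exp (- \<delta>1 * t) / q" using q1 by (simp add: field_simps)
        then show ?thesis using A1 by (intro mult_left_mono) auto
      qed
      also have "\<dots> = b * norm (x 0 - \<theta>s) * exp (- \<delta>1 * t)" unfolding b_def by simp
      finally show ?thesis .
    qed
  qed
qed

end
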